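(* Let $d\ge0$ and let $f\colon\{0,1\}^m\to\{0,1\}^n$ be a $d$-local function. Then there exist a set $S\subseteq[m]$ and numbers $r,t$ with $$|S|\le\frac{r}{2^{28t-18}},\qquad r\ge\frac{n}{\mathrm{tow}_2(16d)},\qquad t\le\mathrm{tow}_2(16d),$$ such that for every fixing $\rho\in\{0,1\}^S$ of the input bits in $S$, the restricted function $f_\rho\colon\{0,1\}^{[m]\setminus S}\to\{0,1\}^n$ is $(d,r,t)$-local.
   Context: A function is $d$-local if each output bit depends on at most $d$ input bits; $I_g(i)$ is the set of input coordinates on which output $i$ of $g$ depends. $f_\rho(z')=f(\rho,z')$. $N_g(i)=\{j: I_g(j)\cap I_g(i)\neq\emptyset\}$. Neighborhoods $N_g(i_1),\dots,N_g(i_r)$ are non-connected if the sets $\bigcup_{j\in N_g(i_a)}I_g(j)$ are pairwise disjoint. $g$ is $(d,r,t)$-local if it is $d$-local and has $r$ non-connected neighborhoods each of size at most $t$. $\mathrm{tow}_2(0)=1$, $\mathrm{tow}_2(h)=2^{\mathrm{tow}_2(h-1)}$. *)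

theory Defs
  imports Complex_Main
begin

text \<open>Inputs with coordinate set D: boolean assignments that are False outside D
  (so {0,1}^D is represented faithfully). Outputs are the bits 0..n-1 of a nat => bool.\<close>

definition inputs :: "nat set \<Rightarrow> (nat \<Rightarrow> bool) set" where
  "inputs D = {x. \<forall>k. k \<notin> D \<longrightarrow> \<not> x k}"

definition dep :: "((nat \<Rightarrow> bool) \<Rightarrow> (nat \<Rightarrow> bool)) \<Rightarrow> nat set \<Rightarrow> nat \<Rightarrow> nat set" where
  "dep g D i = {j \<in> D. \<exists>x \<in> inputs D. g x i \<noteq> g (x(j := \<not> x j)) i}"

definition is_local :: "((nat \<Rightarrow> bool) \<Rightarrow> (nat \<Rightarrow> bool)) \<Rightarrow> nat set \<Rightarrow> nat \<Rightarrow> nat \<Rightarrow> bool" where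
  "is_local g D n d \<longleftrightarrow> (\<forall>i<n. card (dep g D i) \<le> d)"

definition nbhd :: "((nat \<Rightarrow> bool) \<Rightarrow> (nat \<Rightarrow> bool)) \<Rightarrow> nat set \<Rightarrow> nat \<Rightarrow> nat \<Rightarrow> nat set" where
  "nbhd g D n i = {j. j < n \<and> dep g D j \<inter> dep g D i \<noteq> {}}"

definition nbhd_inputs :: "((nat \<Rightarrow> bool) \<Rightarrow> (nat \<Rightarrow> bool)) \<Rightarrow> nat set \<Rightarrow> nat \<Rightarrow> nat \<Rightarrow> nat set" where
  "nbhd_inputs g D n i = (\<Union>j \<in> nbhd g D n i. dep g D j)"

definition drt_local :: "((nat \<Rightarrow> bool) \<Rightarrow> (nat \<Rightarrow> bool)) \<Rightarrow> nat set \<Rightarrow> nat \<Rightarrow> nat \<Rightarrow> nat \<Rightarrow> nat \<Rightarrow> bool" where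
  "drt_local g D n d r t \<longleftrightarrow> is_local g D n d \<and>
     (\<exists>A \<subseteq> {..<n}. card A = r \<and> (\<forall>a \<in> A. card (nbhd g D n a) \<le> t) \<and>
        (\<forall>a \<in> A. \<forall>b \<in> A. a \<noteq> b \<longrightarrow> nbhd_inputs g D n a \<inter> nbhd_inputs g D n b = {}))"

definition restr :: "((nat \<Rightarrow> bool) \<Rightarrow> (nat \<Rightarrow> bool)) \<Rightarrow> nat set \<Rightarrow> (nat \<Rightarrow> bool) \<Rightarrow> (nat \<Rightarrow> bool) \<Rightarrow> (nat \<Rightarrow> bool)" where
  "restr f S \<rho> = (\<lambda>z. f (\<lambda>k. if k \<in> S then \<rho> k else z k))"

fun tow2 :: "nat \<Rightarrow> nat" where
  "tow2 0 = 1"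
| "tow2 (Suc h) = 2 ^ tow2 h"

end

theory Submission
  imports Defs
begin

definition EE :: "(nat \<Rightarrow> nat set) \<Rightarrow> nat set \<Rightarrow> nat \<Rightarrow> nat set" where
  "EE e S c = e c - S"
definition nb :: "(nat \<Rightarrow> nat set) \<Rightarrow> nat \<Rightarrow> nat set \<Rightarrow> nat \<Rightarrow> nat set" where
  "nb e n S b = {c. c < n \<and> EE e S c \<inter> EE e S b \<noteq> {}}"
definition UU :: "(nat \<Rightarrow> nat set) \<Rightarrow> nat \<Rightarrow> nat set \<Rightarrow> nat \<Rightarrow> nat set" where
  "UU e n S b = \<Union> (EE e S ` nb e n S b)"

lemma nb_mono: "S \<subseteq> S' \<Longrightarrow> nb e n S' b \<subseteq> nb e n S b"
  unfolding nb_def EE_def by auto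

lemma UU_mono: "S \<subseteq> S' \<Longrightarrow> UU e n S' b \<subseteq> UU e n S b - S'"
  unfolding UU_def nb_def EE_def by blast

lemma iter:
  fixes e :: "nat \<Rightarrow> nat set" and B M :: "nat set"
  assumes finB: "finite B"
  shows "\<And>S R. (\<forall>b\<in>B. finite (UU e n S b) \<and> card (UU e n S b) \<le> p \<and> card (UU e n S b) \<le> s \<and> UU e n S b \<subseteq> M)
     \<Longrightarrow> R p \<le> card B \<Longrightarrow>
   \<exists>S' A i. S \<subseteq> S' \<and> S' - S \<subseteq> M \<and> finite (S' - S) \<and> i \<le> p \<and> A \<subseteq> B \<and> card A = R i
     \<and> (\<forall>a\<in>A. \<forall>b\<in>A. a \<noteq> b \<longrightarrow> UU e n S' a \<inter> UU e n S' b = {})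
     \<and> card (S' - S) \<le> s * (\<Sum>l<i. R l)"
proof (induction p)
  case 0
  then have emp: "\<forall>b\<in>B. UU e n S b = {}" by auto
  obtain A where A: "A \<subseteq> B" "card A = R 0" using obtain_subset_with_card_n[OF 0(2)] by auto
  show ?case
    apply (rule exI[of _ S], rule exI[of _ A], rule exI[of _ 0])
    using A emp by auto
next
  case (Suc q)
  define D where "D = {F. F \<subseteq> B \<and> (\<forall>a\<in>F. \<forall>b\<in>F. a \<noteq> b \<longrightarrow> UU e n S a \<inter> UU e n S b = {})}"
  have finD: "finite D" unfolding D_def using finB by (simp add: finite_subset[of _ "Pow B"] subset_eq)
  have "{} \<in> D" unfolding D_def by auto
  define k where "k = Max (card ` D)"
  have "k \<in> card ` D" unfolding k_def using finD \<open>{} \<in> D\<close> by (intro Max_in) auto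
  then obtain F where F: "F \<in> D" "card F = k" by auto
  have kmax: "\<And>G. G \<in> D \<Longrightarrow> card G \<le> k" unfolding k_def using finD by auto
  have FB: "F \<subseteq> B" and Fdisj: "\<forall>a\<in>F. \<forall>b\<in>F. a \<noteq> b \<longrightarrow> UU e n S a \<inter> UU e n S b = {}"
    using F(1) unfolding D_def by auto
  have finF: "finite F" using FB finB finite_subset by auto
  have maxF: "\<exists>a\<in>F. UU e n S a \<inter> UU e n S b \<noteq> {}" if "b \<in> B" "b \<notin> F" for b
  proof (rule ccontr)
    assume "\<not> ?thesis"
    then have "insert b F \<in> D" using Fdisj FB that unfolding D_def by blast
    then have "card (insert b F) \<le> k" by (rule kmax)
    then show False using F(2) finF that by simp
  qed
  show ?case
  proof (cases "R 0 \<le> card F")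
    case True
    obtain A where A: "A \<subseteq> F" "card A = R 0" using obtain_subset_with_card_n[OF True] by auto
    show ?thesis
      apply (rule exI[of _ S], rule exI[of _ A], rule exI[of _ 0])
      using A FB Fdisj by (simp, blast)
  next
    case False
    define C where "C = \<Union> (UU e n S ` F)"
    define S1 where "S1 = S \<union> C"
    have finC: "finite C" unfolding C_def using finF FB Suc.prems(1) by auto
    have CM: "C \<subseteq> M" unfolding C_def using FB Suc.prems(1) by auto
    have "card C \<le> (\<Sum>a\<in>F. card (UU e n S a))" unfolding C_def by (rule card_UN_le[OF finF])
    also have "\<dots> \<le> card F * s" using sum_bounded_above[of F "\<lambda>a. card (UU e n S a)" s] FB Suc.prems(1)
      by auto
    also have "\<dots> \<le> s * R 0" using False by simp
    finally have cardC: "card C \<le> s * R 0" .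
    have SS1: "S \<subseteq> S1" unfolding S1_def by auto
    have hyp: "\<forall>b\<in>B. finite (UU e n S1 b) \<and> card (UU e n S1 b) \<le> q \<and> card (UU e n S1 b) \<le> s \<and> UU e n S1 b \<subseteq> M"
    proof
      fix b assume bB: "b \<in> B"
      have sub: "UU e n S1 b \<subseteq> UU e n S b - C" using UU_mono[OF SS1] unfolding S1_def by blast
      have fin: "finite (UU e n S b)" and cb: "card (UU e n S b) \<le> Suc q" "card (UU e n S b) \<le> s"
        and UM: "UU e n S b \<subseteq> M" using Suc.prems(1) bB by auto
      have fin1: "finite (UU e n S1 b)" using sub fin finite_subset by blast
      have c1: "card (UU e n S1 b) \<le> card (UU e n S b)" using sub fin by (meson card_mono Diff_subset order_trans)
      have "card (UU e n S1 b) \<le> q"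
      proof (cases "UU e n S b \<inter> C = {}")
        case False
        then have "UU e n S b - C \<subset> UU e n S b" by blast
        then have "card (UU e n S b - C) < card (UU e n S b)" using fin by (meson psubset_card_mono)
        moreover have "card (UU e n S1 b) \<le> card (UU e n S b - C)" using sub fin by (simp add: card_mono)
        ultimately show ?thesis using cb by linarith
      next
        case True
        have "b \<in> F"
        proof (rule ccontr)
          assume "b \<notin> F"
          then obtain a where "a \<in> F" "UU e n S a \<inter> UU e n S b \<noteq> {}" using maxF bB by blast
          then show False using True unfolding C_def by blast
        qed
        then have "UU e n S b \<subseteq> C" unfolding C_def by auto
        then have "UU e n S1 b = {}" using sub by blast
        then show ?thesis by simp
      qed
      then show "finite (UU e n S1 b) \<and> card (UU e n S1 b) \<le> q \<and> card (UU e n S1 b) \<le> s \<and> UU e n S1 b \<subseteq> M"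
        using fin1 c1 cb sub UM by auto
    qed
    obtain S' A i where IH: "S1 \<subseteq> S'" "S' - S1 \<subseteq> M" "finite (S' - S1)" "i \<le> q" "A \<subseteq> B"
      "card A = R (Suc i)" "\<forall>a\<in>A. \<forall>b\<in>A. a \<noteq> b \<longrightarrow> UU e n S' a \<inter> UU e n S' b = {}"
      "card (S' - S1) \<le> s * (\<Sum>l<i. R (Suc l))"
      using Suc.IH[OF hyp, of "\<lambda>i. R (Suc i)"] Suc.prems(2) by auto
    have sub2: "S' - S \<subseteq> (S' - S1) \<union> C" unfolding S1_def by auto
    have "card (S' - S) \<le> card ((S' - S1) \<union> C)" using sub2 IH(3) finC by (simp add: card_mono)
    also have "\<dots> \<le> card (S' - S1) + card C" by (rule card_Un_le)
    also have "\<dots> \<le> s * (\<Sum>l<i. R (Suc l)) + s * R 0" using IH(8) cardC by linarith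
    also have "\<dots> = s * (\<Sum>l<Suc i. R l)" by (simp only: sum.lessThan_Suc_shift distrib_left add.commute)
    finally have cost: "card (S' - S) \<le> s * (\<Sum>l<Suc i. R l)" .
    show ?thesis
      apply (rule exI[of _ S'], rule exI[of _ A], rule exI[of _ "Suc i"])
      using IH SS1 sub2 CM finC cost by (auto intro: finite_subset)
  qed
qed

lemma link:
  assumes "S \<subseteq> {..<m}" "\<rho> \<in> inputs S"
  shows "dep (restr f S \<rho>) ({..<m} - S) i \<subseteq> dep f {..<m} i - S"
proof
  fix j assume "j \<in> dep (restr f S \<rho>) ({..<m} - S) i"
  then obtain z where j: "j \<in> {..<m} - S" "z \<in> inputs ({..<m} - S)"
    "restr f S \<rho> z i \<noteq> restr f S \<rho> (z(j := \<not> z j)) i"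
    unfolding dep_def by auto
  define x where "x = (\<lambda>k. if k \<in> S then \<rho> k else z k)"
  have xin: "x \<in> inputs {..<m}" using j(2) assms unfolding x_def inputs_def by auto
  have eq: "(\<lambda>k. if k \<in> S then \<rho> k else (z(j := \<not> z j)) k) = x(j := \<not> x j)"
    using j(1) unfolding x_def by (auto simp: fun_eq_iff)
  have "f x i \<noteq> f (x(j := \<not> x j)) i" using j(3) eq unfolding restr_def x_def by simp
  then show "j \<in> dep f {..<m} i - S" using j(1) xin unfolding dep_def by auto
qed

lemma cnt: fixes n :: nat shows "card {i. i < n \<and> P i} = (\<Sum>i<n. (of_bool (P i) :: nat))"
proof (induction n)
  case 0
  then show ?case by simp
next
  case (Suc n)
  have "{i. i < Suc n \<and> P i} = (if P n then insert n {i. i < n \<and> P i} else {i. i < n \<and> P i})"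
    by (auto simp: less_Suc_eq)
  then show ?case using Suc by simp
qed

lemma double_count: fixes e :: "nat \<Rightarrow> nat set" and m n :: nat shows
  "(\<Sum>x<m. card {i. i < n \<and> x \<in> e i}) = (\<Sum>i<n. card {x. x < m \<and> x \<in> e i})"
proof -
  have "(\<Sum>x<m. card {i. i < n \<and> x \<in> e i}) = (\<Sum>x<m. \<Sum>i<n. (of_bool (x \<in> e i) :: nat))"
    by (simp only: cnt)
  also have "\<dots> = (\<Sum>i<n. \<Sum>x<m. (of_bool (x \<in> e i) :: nat))" by (rule sum.swap)
  also have "\<dots> = (\<Sum>i<n. card {x. x < m \<and> x \<in> e i})"
    by (simp only: cnt)
  finally show ?thesis .
qed

lemma heavy: fixes e :: "nat \<Rightarrow> nat set" and m n K d :: nat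
  assumes "\<forall>i<n. e i \<subseteq> {..<m} \<and> card (e i) \<le> d"
  shows "card {x. x < m \<and> K < card {i. i < n \<and> x \<in> e i}} * K \<le> n * d"
proof -
  define H where "H = {x. x < m \<and> K < card {i. i < n \<and> x \<in> e i}}"
  have finH: "finite H" unfolding H_def by (rule finite_subset[of _ "{..<m}"]) auto
  have "card H * K \<le> (\<Sum>x\<in>H. card {i. i < n \<and> x \<in> e i})"
    using sum_bounded_below[of H K "\<lambda>x. card {i. i < n \<and> x \<in> e i}"] unfolding H_def
    by (simp add: mult.commute)
  also have "\<dots> \<le> (\<Sum>x<m. card {i. i < n \<and> x \<in> e i})"
    by (rule sum_mono2) (auto simp: H_def)
  also have "\<dots> = (\<Sum>i<n. card {x. x < m \<and> x \<in> e i})" by (rule double_count)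
  also have "\<dots> \<le> (\<Sum>i<n. d)"
  proof (rule sum_mono)
    fix i assume "i \<in> {..<n}"
    then have "e i \<subseteq> {..<m}" "card (e i) \<le> d" using assms by auto
    then have "{x. x < m \<and> x \<in> e i} = e i" by auto
    then show "card {x. x < m \<and> x \<in> e i} \<le> d" using \<open>card (e i) \<le> d\<close> by simp
  qed
  also have "\<dots> = n * d" by simp
  finally show ?thesis unfolding H_def .
qed

lemma band_select:
  fixes K deg :: "nat \<Rightarrow> nat" and e :: "nat \<Rightarrow> nat set"
  assumes strict: "\<And>i. K i < K (Suc i)"
    and fin: "\<And>b. b < n \<Longrightarrow> finite (e b) \<and> card (e b) \<le> d"
  shows "\<exists>j\<le>d. n \<le> (d+1) * card {b. b < n \<and> (\<forall>x\<in>e b. deg x \<le> K j \<or> K (Suc j) < deg x)}"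
proof -
  define G where "G j = {b. b < n \<and> (\<forall>x\<in>e b. deg x \<le> K j \<or> K (Suc j) < deg x)}" for j
  have Kmono: "K a \<le> K b" if "a \<le> b" for a b
    using lift_Suc_mono_le[of K, OF _ that] strict by (simp add: less_imp_le)
  have good: "\<exists>j\<le>d. b \<in> G j" if bn: "b < n" for b
  proof -
    define L where "L = {j. j \<le> d \<and> (\<exists>x\<in>e b. K j < deg x \<and> deg x \<le> K (Suc j))}"
    define g where "g j = (SOME x. x \<in> e b \<and> K j < deg x \<and> deg x \<le> K (Suc j))" for j
    have gP: "g j \<in> e b \<and> K j < deg (g j) \<and> deg (g j) \<le> K (Suc j)" if "j \<in> L" for j
      using that unfolding L_def g_def by (metis (mono_tags, lifting) mem_Collect_eq someI_ex)
    have inj: "inj_on g L"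
    proof (rule inj_onI)
      fix j j' assume jj: "j \<in> L" "j' \<in> L" "g j = g j'"
      show "j = j'"
      proof (rule ccontr)
        assume "j \<noteq> j'"
        then have "Suc j \<le> j' \<or> Suc j' \<le> j" by auto
        then show False
        proof
          assume "Suc j \<le> j'"
          then have "K (Suc j) \<le> K j'" by (rule Kmono)
          then show False using gP[OF jj(1)] gP[OF jj(2)] jj(3) by auto
        next
          assume "Suc j' \<le> j"
          then have "K (Suc j') \<le> K j" by (rule Kmono)
          then show False using gP[OF jj(1)] gP[OF jj(2)] jj(3) by auto
        qed
      qed
    qed
    have "g ` L \<subseteq> e b" using gP by auto
    then have "card L \<le> card (e b)" using inj fin[OF bn] by (metis card_inj_on_le)
    also have "\<dots> \<le> d" using fin[OF bn] by auto
    finally have "card L < card {..d}" by simp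
    then have "\<not> {..d} \<subseteq> L"
    proof -
      have "finite L" unfolding L_def by auto
      show ?thesis
      proof
        assume "{..d} \<subseteq> L"
        then have "card {..d} \<le> card L" using \<open>finite L\<close> card_mono by blast
        then show False using \<open>card L < card {..d}\<close> by simp
      qed
    qed
    then obtain j where "j \<le> d" "j \<notin> L" by auto
    then have "b \<in> G j" unfolding L_def G_def using bn by auto
    then show ?thesis using \<open>j \<le> d\<close> by auto
  qed
  show ?thesis
  proof (rule ccontr)
    assume "\<not> ?thesis"
    then have lt: "\<And>j. j \<le> d \<Longrightarrow> (d+1) * card (G j) < n" unfolding G_def by auto
    have "{..<n} \<subseteq> (\<Union>j\<in>{..d}. G j)" using good by auto
    moreover have "finite (\<Union>j\<in>{..d}. G j)" unfolding G_def by auto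
    ultimately have "card {..<n} \<le> card (\<Union>j\<in>{..d}. G j)" by (rule card_mono[rotated])
    then have "n \<le> card (\<Union>j\<in>{..d}. G j)" by simp
    also have "\<dots> \<le> (\<Sum>j\<le>d. card (G j))" by (rule card_UN_le) simp
    finally have n1: "n \<le> (\<Sum>j\<le>d. card (G j))" .
    have "(\<Sum>j\<le>d. (d+1) * card (G j)) < (\<Sum>j\<le>d. n)"
      apply (rule sum_strict_mono) apply simp apply simp apply (rule lt) apply simp done
    then have "(d+1) * (\<Sum>j\<le>d. card (G j)) < (d+1) * n" by (simp add: sum_distrib_left)
    then have "(\<Sum>j\<le>d. card (G j)) < n" using mult_less_cancel1 by blast
    then show False using n1 by simp
  qed
qed

definition Psi :: "nat \<Rightarrow> nat \<Rightarrow> nat" where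
  "Psi d K = 4*d*(d+1)*(1 + 2*(d*(d*K))*2^(28*(d*K)))^(d*(d*K)) * 2^(28*(d*K))"

fun Kseq :: "nat \<Rightarrow> nat \<Rightarrow> nat" where
  "Kseq d 0 = 0"
| "Kseq d (Suc i) = Psi d (Kseq d i)"

lemma sq_le_exp: "4 \<le> (x::nat) \<Longrightarrow> x * x \<le> 2 ^ x"
proof (induction x rule: dec_induct)
  case base
  then show ?case by simp
next
  case (step x)
  have "Suc x * Suc x = x * x + 2 * x + 1" by simp
  also have "\<dots> \<le> x * x + x * x"
  proof -
    have "4 * x \<le> x * x" using step(1) by (simp add: mult_le_mono1)
    then show ?thesis using step(1) by linarith
  qed
  also have "\<dots> \<le> 2 ^ x + 2 ^ x" using step(3) by simp
  finally show ?case by simp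
qed

lemma tow2_ge: "2 ^ h \<le> tow2 h"
proof (induction h)
  case 0 then show ?case by simp
next
  case (Suc h)
  have "Suc h \<le> 2 ^ h" by (rule Suc_leI[OF less_exp])
  also have "\<dots> \<le> tow2 h" by (rule Suc)
  finally have "(2::nat) ^ Suc h \<le> 2 ^ tow2 h" by (rule power_increasing) simp
  then show ?case by simp
qed

lemma tow2_Suc_ge: "tow2 h \<le> tow2 (Suc h)"
  using less_exp[of "tow2 h"] by simp

lemma tow2_mono: "h \<le> h' \<Longrightarrow> tow2 h \<le> tow2 h'"
proof (induction h' rule: dec_induct)
  case base then show ?case by simp
next
  case (step k)
  then show ?case using tow2_Suc_ge[of k] by linarith
qed

lemma Psi_bound:
  assumes d1: "1 \<le> d"
  shows "Psi d K \<le> 2 ^ (2 ^ (9 * (d * (K + 1))))"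
proof -
  define Y where "Y = d * (K + 1)"
  define t where "t = d * K"
  define s where "s = d * t"
  have Y1: "1 \<le> Y" unfolding Y_def using d1 by simp
  have tY: "t \<le> Y" unfolding t_def Y_def by simp
  have dY: "d \<le> Y" unfolding Y_def by simp
  have sY: "s \<le> Y * Y"
  proof -
    have "s = d * (d * K)" unfolding s_def t_def by simp
    also have "\<dots> \<le> d * (d * (K+1))" by simp
    also have "\<dots> \<le> (d * (K+1)) * (d * (K+1))" by (simp add: mult_le_mono)
    finally show ?thesis unfolding Y_def .
  qed
  have Yexp: "Y < 2 ^ Y" by (rule less_exp)
  have YY: "Y * Y \<le> 2 ^ (2 * Y)"
  proof -
    have "Y * Y \<le> 2 ^ Y * 2 ^ Y" using Yexp by (simp add: mult_le_mono less_imp_le)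
    then show ?thesis by (simp add: power_add[symmetric] mult_2)
  qed
  have Q: "1 + 2 * s * 2 ^ (28 * t) \<le> 2 ^ (32 * Y)"
  proof -
    have "2 * s * 2 ^ (28 * t) \<le> 2 * 2 ^ (2 * Y) * 2 ^ (28 * Y)"
      using sY YY tY by (intro mult_le_mono) (auto intro: power_increasing)
    also have "\<dots> = 2 ^ (1 + 30 * Y)" by (simp add: power_add[symmetric])
    finally have a: "2 * s * 2 ^ (28 * t) \<le> 2 ^ (1 + 30 * Y)" .
    have b: "1 \<le> (2::nat) ^ (1 + 30 * Y)" by simp
    have "1 + 2 * s * 2 ^ (28 * t) \<le> 2 ^ (1 + 30 * Y) + 2 ^ (1 + 30 * Y)" using a b by linarith
    also have "\<dots> = 2 ^ (2 + 30 * Y)" by simp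
    also have "\<dots> \<le> 2 ^ (32 * Y)" using Y1 by (intro power_increasing) auto
    finally show ?thesis .
  qed
  have Qs: "(1 + 2 * s * 2 ^ (28 * t)) ^ s \<le> 2 ^ (32 * (Y * Y * Y))"
  proof -
    have "(1 + 2 * s * 2 ^ (28 * t)) ^ s \<le> (2 ^ (32 * Y)) ^ s" using Q by (rule power_mono) simp
    also have "\<dots> = 2 ^ (32 * Y * s)" by (simp add: power_mult)
    also have "\<dots> \<le> 2 ^ (32 * (Y * Y * Y))"
    proof (intro power_increasing)
      have "Y * s \<le> Y * (Y * Y)" using sY by (rule mult_le_mono2)
      then show "32 * Y * s \<le> 32 * (Y * Y * Y)" by (simp add: mult.assoc)
    qed simp
    finally show ?thesis .
  qed
  have dd: "4 * d * (d + 1) \<le> 2 ^ (2 + 2 * Y)"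
  proof -
    have d2: "d \<le> 2 ^ Y" using dY Yexp by linarith
    have "d + 1 \<le> 2 ^ d" using Suc_leI[OF less_exp[of d]] by simp
    also have "\<dots> \<le> 2 ^ Y" using dY by (intro power_increasing) auto
    finally have d3: "d + 1 \<le> 2 ^ Y" .
    have "4 * d * (d + 1) \<le> 4 * 2 ^ Y * 2 ^ Y" using d2 d3 by (intro mult_le_mono) auto
    also have "\<dots> = 2 ^ (2 + Y + Y)" by (simp only: power_add) simp
    also have "\<dots> = 2 ^ (2 + 2 * Y)" by simp
    finally show ?thesis .
  qed
  have tt: "(2::nat) ^ (28 * t) \<le> 2 ^ (28 * Y)" using tY by (intro power_increasing) auto
  have "Psi d K = 4 * d * (d + 1) * (1 + 2 * s * 2 ^ (28 * t)) ^ s * 2 ^ (28 * t)"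
    unfolding Psi_def s_def t_def by (simp add: mult.assoc)
  also have "\<dots> \<le> 2 ^ (2 + 2 * Y) * 2 ^ (32 * (Y * Y * Y)) * 2 ^ (28 * Y)"
    using dd Qs tt by (intro mult_le_mono) auto
  also have "\<dots> = 2 ^ (2 + 2 * Y + 32 * (Y * Y * Y) + 28 * Y)" by (simp only: power_add)
  also have "\<dots> \<le> 2 ^ (64 * (Y * Y * Y))"
  proof (intro power_increasing)
    have "Y * 1 * 1 \<le> Y * Y * Y" using Y1 by (intro mult_le_mono) auto
    then have "Y \<le> Y * Y * Y" by simp
    moreover have "1 \<le> Y * Y * Y" using Y1 by simp
    ultimately show "2 + 2 * Y + 32 * (Y * Y * Y) + 28 * Y \<le> 64 * (Y * Y * Y)" by linarith
  qed simp
  also have "\<dots> \<le> 2 ^ (2 ^ (9 * Y))"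
  proof (intro power_increasing)
    have "Y * Y * Y \<le> 2 ^ Y * 2 ^ Y * 2 ^ Y" using Yexp by (intro mult_le_mono) auto
    also have "\<dots> = 2 ^ (Y + Y + Y)" by (simp only: power_add)
    also have "\<dots> = 2 ^ (3 * Y)" by simp
    finally have "64 * (Y * Y * Y) \<le> 2 ^ 6 * 2 ^ (3 * Y)" by simp
    also have "\<dots> = 2 ^ (6 + 3 * Y)" by (simp add: power_add)
    also have "\<dots> \<le> 2 ^ (9 * Y)" using Y1 by (intro power_increasing) auto
    finally show "64 * (Y * Y * Y) \<le> 2 ^ (9 * Y)" .
  qed simp
  finally show ?thesis unfolding Y_def .
qed

lemma Psi_tow:
  assumes d1: "1 \<le> d" and h: "d + 5 \<le> h" and K: "K \<le> tow2 h"
  shows "Psi d K \<le> tow2 (h + 3)"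
proof -
  define x where "x = tow2 h"
  have "(2::nat) ^ (d + 5) \<le> 2 ^ h" using h by (intro power_increasing) auto
  then have "2 ^ (d + 5) \<le> x" unfolding x_def using tow2_ge[of h] by linarith
  moreover have "18 * d \<le> 2 ^ (d + 5)"
  proof -
    have "d \<le> 2 ^ d" using less_exp[of d] by simp
    then have "9 * d \<le> 16 * 2 ^ d" by linarith
    then show ?thesis by (simp add: power_add)
  qed
  ultimately have x18: "18 * d \<le> x" by simp
  have "(4::nat) \<le> 2 ^ (d + 5)" by (simp add: power_add)
  then have x4: "4 \<le> x" using \<open>2 ^ (d+5) \<le> x\<close> by linarith
  have "9 * (d * (K + 1)) \<le> 9 * (d * (x + x))"
    using K x4 unfolding x_def by (intro mult_le_mono) auto
  also have "\<dots> = 18 * d * x" by simp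
  also have "\<dots> \<le> x * x" using x18 by (simp add: mult_le_mono)
  also have "\<dots> \<le> 2 ^ x" using x4 by (rule sq_le_exp)
  finally have a: "9 * (d * (K + 1)) \<le> tow2 (Suc h)" unfolding x_def by simp
  have "Psi d K \<le> 2 ^ (2 ^ (9 * (d * (K + 1))))" using Psi_bound[OF d1] .
  also have "\<dots> \<le> 2 ^ (2 ^ tow2 (Suc h))" using a by (intro power_increasing) auto
  also have "\<dots> = tow2 (h + 3)" by (simp add: numeral_3_eq_3)
  finally show ?thesis .
qed

lemma Kseq_bound: "1 \<le> d \<Longrightarrow> Kseq d i \<le> tow2 (d + 5 + 3 * i)"
proof (induction i)
  case 0 then show ?case by simp
next
  case (Suc i)
  have "Psi d (Kseq d i) \<le> tow2 (d + 5 + 3 * i + 3)" using Psi_tow[OF Suc(2) _ Suc.IH[OF Suc(2)]] by simp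
  then show ?case by simp
qed

lemma Kseq_final: "1 \<le> d \<Longrightarrow> Kseq d (d + 1) \<le> tow2 (16 * d)"
proof -
  assume d: "1 \<le> d"
  have "Kseq d (d+1) \<le> tow2 (d + 5 + 3 * (d + 1))" by (rule Kseq_bound[OF d])
  also have "\<dots> \<le> tow2 (16 * d)" using d by (intro tow2_mono) simp
  finally show ?thesis .
qed

lemma Psi_ge: "1 \<le> d \<Longrightarrow> d * K < Psi d K \<and> K < Psi d K \<and>
   2 * (d + 1) * (1 + 2*(d*(d*K))*2^(28*(d*K)))^(d*(d*K)) \<le> Psi d K"
proof -
  assume d: "1 \<le> d"
  define Q where "Q = (1 + 2*(d*(d*K))*2^(28*(d*K)))^(d*(d*K))"
  have Q1: "1 \<le> Q" unfolding Q_def by simp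
  have P: "Psi d K = 4 * d * (d + 1) * Q * 2 ^ (28 * (d * K))" unfolding Psi_def Q_def by simp
  have "d * K < 2 ^ (d * K)" by (rule less_exp)
  also have "\<dots> \<le> 2 ^ (28 * (d * K))" by (intro power_increasing) auto
  also have "\<dots> \<le> (4 * d * (d + 1) * Q) * 2 ^ (28 * (d * K))" using d Q1 by simp
  finally have a: "d * K < Psi d K" using P by simp
  have "K \<le> d * K" using d mult_le_mono1[of 1 d K] by simp
  then have b: "K < Psi d K" using a by linarith
  have "1 * (4 * (d + 1)) \<le> d * (4 * (d + 1))" using d by (rule mult_le_mono1)
  then have "2 * (d + 1) \<le> 4 * d * (d + 1)" by simp
  then have "2 * (d + 1) * Q \<le> 4 * d * (d + 1) * Q * 1" using mult_le_mono1[of "2 * (d + 1)" "4 * d * (d + 1)" Q] by simp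
  also have "\<dots> \<le> 4 * d * (d + 1) * Q * 2 ^ (28 * (d * K))" by (intro mult_le_mono) auto
  finally have c: "2 * (d + 1) * Q \<le> Psi d K" using P by simp
  show ?thesis using a b c unfolding Q_def by simp
qed

lemma geom:
  fixes R :: "nat \<Rightarrow> nat" and c0 s X :: nat
  assumes base: "2 * c0 * X \<le> R 0" and step: "\<And>l. R (Suc l) = (1 + 2 * s * X) * R l"
  shows "(c0 + s * (\<Sum>l<i. R l)) * X * 2 \<le> R i"
proof (induction i)
  case 0 then show ?case using base by (simp add: mult.commute mult.left_commute)
next
  case (Suc i)
  have alg: "(c0 + s * (a + b)) * X * 2 = (c0 + s * a) * X * 2 + 2 * s * X * b" for a b :: nat
    by algebra
  have "(c0 + s * (\<Sum>l<Suc i. R l)) * X * 2 = (c0 + s * (\<Sum>l<i. R l)) * X * 2 + 2 * s * X * R i"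
    unfolding sum.lessThan_Suc by (rule alg)
  also have "\<dots> \<le> R i + 2 * s * X * R i" using Suc.IH by simp
  also have "\<dots> = R (Suc i)" unfolding step[of i] by (simp only: distrib_right mult_1)
  finally show ?case .
qed

lemma finish:
  fixes f :: "(nat \<Rightarrow> bool) \<Rightarrow> (nat \<Rightarrow> bool)" and m n d :: nat
  assumes loc: "is_local f {..<m} n d"
    and e_def: "e = (\<lambda>i. dep f {..<m} i)"
    and Sm: "S \<subseteq> {..<m}" and An: "A \<subseteq> {..<n}" and cA: "card A = r"
    and nbt: "\<forall>a\<in>A. card (nb e n S a) \<le> t"
    and disj: "\<forall>a\<in>A. \<forall>b\<in>A. a \<noteq> b \<longrightarrow> UU e n S a \<inter> UU e n S b = {}"
    and cS: "card S * 2 ^ (28 * t) \<le> r"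
    and rT: "n \<le> r * tow2 (16 * d)" and tT: "t \<le> tow2 (16 * d)"
  shows "\<exists>S r t. S \<subseteq> {..<m}
    \<and> real (card S) \<le> real r / 2 powr (28 * real t - 18)
    \<and> real r \<ge> real n / real (tow2 (16 * d))
    \<and> t \<le> tow2 (16 * d)
    \<and> (\<forall>\<rho> \<in> inputs S. drt_local (restr f S \<rho>) ({..<m} - S) n d r t)"
proof (intro exI conjI)
  show "S \<subseteq> {..<m}" by (rule Sm)
  show "t \<le> tow2 (16 * d)" by (rule tT)
  have "(0::nat) < 2 ^ (16 * d)" by simp
  then have Tpos: "0 < tow2 (16 * d)" using tow2_ge[of "16*d"] by (rule less_le_trans)
  show "real r \<ge> real n / real (tow2 (16 * d))"
  proof -
    have "real n \<le> real (r * tow2 (16 * d))" using rT by (simp only: of_nat_le_iff)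
    then have "real n \<le> real r * real (tow2 (16 * d))" by simp
    then show ?thesis using Tpos by (simp add: pos_divide_le_eq)
  qed
  show "real (card S) \<le> real r / 2 powr (28 * real t - 18)"
  proof -
    have p: "(2::real) powr (28 * real t) = 2 ^ (28 * t)"
      using powr_realpow[of 2 "28 * t"] by simp
    have "(2::real) powr (28 * real t - 18) \<le> 2 powr (28 * real t)" by (intro powr_mono) auto
    then have le: "(2::real) powr (28 * real t - 18) \<le> 2 ^ (28 * t)" using p by simp
    have "real (card S * 2 ^ (28 * t)) \<le> real r" using cS by (simp only: of_nat_le_iff)
    then have "real (card S) * 2 ^ (28 * t) \<le> real r" by simp
    then have "real (card S) \<le> real r / 2 ^ (28 * t)" by (simp add: pos_le_divide_eq)
    also have "\<dots> \<le> real r / 2 powr (28 * real t - 18)"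
      by (rule divide_left_mono[OF le]) auto
    finally show ?thesis .
  qed
  show "\<forall>\<rho> \<in> inputs S. drt_local (restr f S \<rho>) ({..<m} - S) n d r t"
  proof
    fix \<rho> assume \<rho>: "\<rho> \<in> inputs S"
    define g where "g = restr f S \<rho>"
    define D where "D = {..<m} - S"
    have dsub: "dep g D i \<subseteq> e i - S" for i unfolding g_def D_def e_def using link[OF Sm \<rho>] by auto
    have efin: "finite (e i)" for i unfolding e_def dep_def by auto
    have islocal: "is_local g D n d" unfolding is_local_def
    proof (intro allI impI)
      fix i assume "i < n"
      then have "card (e i) \<le> d" using loc unfolding is_local_def e_def by auto
      moreover have "card (dep g D i) \<le> card (e i)"
      proof -
        have "dep g D i \<subseteq> e i" using dsub[of i] by blast
        then show ?thesis using efin[of i] by (simp add: card_mono)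
      qed
      ultimately show "card (dep g D i) \<le> d" by simp
    qed
    have nbsub: "nbhd g D n a \<subseteq> nb e n S a" for a
      unfolding nbhd_def nb_def EE_def using dsub by blast
    have nisub: "nbhd_inputs g D n a \<subseteq> UU e n S a" for a
      unfolding nbhd_inputs_def UU_def nbhd_def nb_def EE_def using dsub by blast
    have cardt: "card (nbhd g D n a) \<le> t" if "a \<in> A" for a
    proof -
      have "finite (nb e n S a)" unfolding nb_def by auto
      then have "card (nbhd g D n a) \<le> card (nb e n S a)" using nbsub by (rule card_mono)
      then show ?thesis using nbt that by fastforce
    qed
    have disj2: "\<forall>a\<in>A. \<forall>b\<in>A. a \<noteq> b \<longrightarrow> nbhd_inputs g D n a \<inter> nbhd_inputs g D n b = {}"
    proof (intro ballI impI)
      fix a b assume "a \<in> A" "b \<in> A" "a \<noteq> b"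
      then have "UU e n S a \<inter> UU e n S b = {}" using disj by blast
      then show "nbhd_inputs g D n a \<inter> nbhd_inputs g D n b = {}" using nisub[of a] nisub[of b] by blast
    qed
    have "drt_local g D n d r t" unfolding drt_local_def
      apply (rule conjI, rule islocal)
      apply (rule exI[of _ A])
      using An cA cardt disj2 by simp
    then show "drt_local (restr f S \<rho>) ({..<m} - S) n d r t" unfolding g_def D_def .
  qed
qed

theorem mainTheorem14:
  fixes f :: "(nat \<Rightarrow> bool) \<Rightarrow> (nat \<Rightarrow> bool)" and m n d :: nat
  assumes "is_local f {..<m} n d"
  shows "\<exists>S r t. S \<subseteq> {..<m}
    \<and> real (card S) \<le> real r / 2 powr (28 * real t - 18)
    \<and> real r \<ge> real n / real (tow2 (16 * d))
    \<and> t \<le> tow2 (16 * d)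
    \<and> (\<forall>\<rho> \<in> inputs S. drt_local (restr f S \<rho>) ({..<m} - S) n d r t)"
proof -
  note loc = assms
  define e where "e = (\<lambda>i. dep f {..<m} i)"
  define T where "T = tow2 (16 * d)"
  have esub: "e i \<subseteq> {..<m}" for i unfolding e_def dep_def by auto
  have efin: "finite (e i)" for i using esub finite_subset by blast
  have ecard: "card (e i) \<le> d" if "i < n" for i using loc that unfolding is_local_def e_def by auto
  have "(1::nat) \<le> 2 ^ (16 * d)" by simp
  then have T1: "1 \<le> T" unfolding T_def using tow2_ge[of "16*d"] by linarith
  show ?thesis
  proof (cases "d = 0")
    case True
    have e0: "e i = {}" if "i < n" for i using ecard[OF that] efin[of i] True by simp
    have nb0: "nb e n {} a = {}" if "a < n" for a
      unfolding nb_def EE_def using e0[OF that] by auto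
    have UU0: "UU e n {} a = {}" if "a < n" for a
      unfolding UU_def using nb0[OF that] by simp
    show ?thesis
      apply (rule finish[OF loc e_def, of "{}" "{..<n}" n 0])
      using nb0 UU0 T1 by (auto simp: T_def)
  next
    case False
    then have d1: "1 \<le> d" by simp
    show ?thesis
    proof (cases "n \<le> T")
      case True
      have nbn: "card (nb e n {} a) \<le> n" for a
      proof -
        have "nb e n {} a \<subseteq> {..<n}" unfolding nb_def by auto
        then show ?thesis using card_mono[of "{..<n}"] by fastforce
      qed
      have nm: "n \<le> min n 1 * T" using True T1 by (cases n) auto
      show ?thesis
        apply (rule finish[OF loc e_def, of "{}" "{..<min n 1}" "min n 1" n])
        using nbn True T1 nm by (auto simp: T_def)
    next
      case False
      then have nT: "T < n" by simp
      define K where "K = Kseq d"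
      have Kstrict: "K i < K (Suc i)" for i unfolding K_def using Psi_ge[OF d1] by simp
      have Kmono: "K a \<le> K b" if "a \<le> b" for a b
        using lift_Suc_mono_le[of K, OF _ that] Kstrict by (simp add: less_imp_le)
      define deg where "deg x = card {i. i < n \<and> x \<in> e i}" for x
      obtain j where j: "j \<le> d"
        and nB: "n \<le> (d+1) * card {b. b < n \<and> (\<forall>x\<in>e b. deg x \<le> K j \<or> K (Suc j) < deg x)}"
        using band_select[of K n e d deg, OF Kstrict] efin ecard by blast
      define B where "B = {b. b < n \<and> (\<forall>x\<in>e b. deg x \<le> K j \<or> K (Suc j) < deg x)}"
      define S0 where "S0 = {x. x < m \<and> K (Suc j) < deg x}"
      define t where "t = d * K j"
      define s where "s = d * t"
      define X where "X = (2::nat) ^ (28 * t)"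
      define Q where "Q = 1 + 2 * s * X"
      define P where "P = Q ^ s"
      have Psi_eq: "K (Suc j) = 4 * d * (d + 1) * P * X"
        unfolding K_def P_def Q_def X_def s_def t_def by (simp add: Psi_def)
      have heavyS0: "card S0 * K (Suc j) \<le> n * d"
        unfolding S0_def deg_def using heavy[of n e m d "K (Suc j)"] esub ecard by blast
      have KT: "K (Suc j) \<le> T"
      proof -
        have "K (Suc j) \<le> K (d + 1)" using j by (intro Kmono) simp
        then show ?thesis unfolding T_def K_def using Kseq_final[OF d1] by linarith
      qed
      have PsiG: "d * K j < K (Suc j) \<and> 2 * (d + 1) * P \<le> K (Suc j)"
        using Psi_ge[OF d1, of "K j"] unfolding K_def P_def Q_def X_def s_def t_def by simp
      have finB: "finite B" unfolding B_def by auto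
      have Bn: "B \<subseteq> {..<n}" unfolding B_def by auto
      have S0m: "S0 \<subseteq> {..<m}" unfolding S0_def by auto
      have nbt: "card (nb e n S0 b) \<le> t" if bB: "b \<in> B" for b
      proof -
        have sub: "nb e n S0 b \<subseteq> (\<Union>y\<in>EE e S0 b. {c. c < n \<and> y \<in> e c})"
          unfolding nb_def EE_def by blast
        have degy: "deg y \<le> K j" if "y \<in> EE e S0 b" for y
        proof -
          have y: "y \<in> e b" "y \<notin> S0" using that unfolding EE_def by auto
          then have "y < m" using esub by blast
          then have "\<not> K (Suc j) < deg y" using y(2) unfolding S0_def by auto
          then show ?thesis using bB y(1) unfolding B_def by auto
        qed
        have finE: "finite (EE e S0 b)" unfolding EE_def using efin by auto
        have "card (nb e n S0 b) \<le> card (\<Union>y\<in>EE e S0 b. {c. c < n \<and> y \<in> e c})"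
          using sub finE by (intro card_mono) auto
        also have "\<dots> \<le> (\<Sum>y\<in>EE e S0 b. card {c. c < n \<and> y \<in> e c})" by (rule card_UN_le[OF finE])
        also have "\<dots> \<le> card (EE e S0 b) * K j"
          using sum_bounded_above[of "EE e S0 b" "\<lambda>y. card {c. c < n \<and> y \<in> e c}" "K j"] degy
          unfolding deg_def by auto
        also have "\<dots> \<le> d * K j"
        proof -
          have "card (EE e S0 b) \<le> card (e b)" unfolding EE_def using efin by (simp add: card_mono)
          also have "\<dots> \<le> d" using ecard bB Bn by auto
          finally show ?thesis by (rule mult_le_mono1)
        qed
        finally show ?thesis unfolding t_def .
      qed
      have UUb: "finite (UU e n S0 b) \<and> card (UU e n S0 b) \<le> s \<and> UU e n S0 b \<subseteq> {..<m}" if bB: "b \<in> B" for b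
      proof -
        have finnb: "finite (nb e n S0 b)" unfolding nb_def by auto
        have finEc: "finite (EE e S0 c)" for c unfolding EE_def using efin by auto
        have "card (UU e n S0 b) \<le> (\<Sum>c\<in>nb e n S0 b. card (EE e S0 c))"
          unfolding UU_def by (rule card_UN_le[OF finnb])
        also have "\<dots> \<le> card (nb e n S0 b) * d"
        proof -
          have bnd: "card (EE e S0 c) \<le> d" if "c \<in> nb e n S0 b" for c
          proof -
            have "c < n" using that unfolding nb_def by auto
            have "card (EE e S0 c) \<le> card (e c)" unfolding EE_def using efin by (simp add: card_mono)
            then show "card (EE e S0 c) \<le> d" using ecard[OF \<open>c < n\<close>] by linarith
          qed
          show ?thesis using sum_bounded_above[of "nb e n S0 b" "\<lambda>c. card (EE e S0 c)" d] bnd by simp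
        qed
        also have "\<dots> \<le> t * d" using nbt[OF bB] by (rule mult_le_mono1)
        finally have "card (UU e n S0 b) \<le> s" unfolding s_def by (simp add: mult.commute)
        moreover have "finite (UU e n S0 b)" unfolding UU_def using finnb finEc by auto
        moreover have "UU e n S0 b \<subseteq> {..<m}" unfolding UU_def EE_def using esub by blast
        ultimately show ?thesis by simp
      qed
      define Dv where "Dv = card B div P"
      define R where "R i = Dv * Q ^ i" for i
      have P1: "1 \<le> P" unfolding P_def Q_def by simp
      have RP: "R s \<le> card B" unfolding R_def Dv_def P_def[symmetric] by simp
      have BP: "P \<le> card B"
      proof -
        have "(d + 1) * P \<le> 2 * (d + 1) * P" by simp
        also have "\<dots> \<le> K (Suc j)" using PsiG by simp
        also have "\<dots> < n" using KT nT by simp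
        also have "\<dots> \<le> (d + 1) * card B" using nB unfolding B_def .
        finally have "(d + 1) * P < (d + 1) * card B" .
        then show ?thesis by (simp only: mult_less_cancel1) simp
      qed
      have B2: "card B \<le> 2 * Dv * P"
      proof -
        have "card B = Dv * P + card B mod P" unfolding Dv_def by simp
        moreover have "card B mod P < P" using P1 by simp
        moreover have "1 \<le> Dv" unfolding Dv_def using div_le_mono[OF BP, of P] P1 by simp
        moreover have "P \<le> Dv * P" using \<open>1 \<le> Dv\<close> by simp
        ultimately show ?thesis by linarith
      qed
      have base: "2 * card S0 * X \<le> R 0"
      proof -
        have "card S0 * (4 * d * (d + 1) * P * X) \<le> n * d" using heavyS0 Psi_eq by simp
        also have "\<dots> \<le> (d + 1) * card B * d" using nB unfolding B_def by simp
        also have "\<dots> \<le> (d + 1) * (2 * Dv * P) * d" using B2 by (intro mult_le_mono) auto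
        finally have "(2 * card S0 * X) * (2 * d * (d + 1) * P) \<le> Dv * (2 * d * (d + 1) * P)"
          by (simp add: algebra_simps)
        moreover have "0 < 2 * d * (d + 1) * P" using d1 P1 by simp
        ultimately have "2 * card S0 * X \<le> Dv" by simp
        then show ?thesis unfolding R_def by simp
      qed
      have stepR: "R (Suc l) = (1 + 2 * s * X) * R l" for l unfolding R_def Q_def by (simp only: power_Suc mult.commute mult.left_commute)
      obtain S' A i where it: "S0 \<subseteq> S'" "S' - S0 \<subseteq> {..<m}" "finite (S' - S0)" "i \<le> s" "A \<subseteq> B"
        "card A = R i" "\<forall>a\<in>A. \<forall>b\<in>A. a \<noteq> b \<longrightarrow> UU e n S' a \<inter> UU e n S' b = {}"
        "card (S' - S0) \<le> s * (\<Sum>l<i. R l)"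
        using iter[OF finB, where n=n and e=e and S=S0 and p=s and s=s and M="{..<m}" and R=R] UUb RP by blast
      have Sm: "S' \<subseteq> {..<m}" using it(1,2) S0m by blast
      have cS: "card S' * X \<le> R i"
      proof -
        have "card S' \<le> card S0 + card (S' - S0)"
        proof -
          have "S' = S0 \<union> (S' - S0)" using it(1) by blast
          then have "card S' = card (S0 \<union> (S' - S0))" by simp
          also have "\<dots> \<le> card S0 + card (S' - S0)" by (rule card_Un_le)
          finally show ?thesis .
        qed
        then have "card S' \<le> card S0 + s * (\<Sum>l<i. R l)" using it(8) by linarith
        then have "card S' * X * 2 \<le> (card S0 + s * (\<Sum>l<i. R l)) * X * 2" by simp
        also have "\<dots> \<le> R i" by (rule geom[OF base stepR])
        finally show ?thesis by simp
      qed
      have Ri: "R 0 \<le> R i" unfolding R_def Q_def by simp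
      have rT: "n \<le> R i * T"
      proof -
        have "n \<le> (d + 1) * card B" using nB unfolding B_def .
        also have "\<dots> \<le> (d + 1) * (2 * Dv * P)" using B2 by (rule mult_le_mono2)
        also have "\<dots> = Dv * (2 * (d + 1) * P)" by (simp only: mult.commute mult.left_commute)
        also have "\<dots> \<le> Dv * T" using PsiG KT by simp
        also have "\<dots> \<le> R i * T" using Ri unfolding R_def by simp
        finally show ?thesis .
      qed
      have tT: "t \<le> T" using PsiG KT unfolding t_def by simp
      have nbt': "\<forall>a\<in>A. card (nb e n S' a) \<le> t"
      proof
        fix a assume "a \<in> A"
        have "finite (nb e n S0 a)" unfolding nb_def by auto
        then have "card (nb e n S' a) \<le> card (nb e n S0 a)" using nb_mono[OF it(1)] by (rule card_mono)
        then show "card (nb e n S' a) \<le> t" using nbt \<open>a \<in> A\<close> it(5) by fastforce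
      qed
      show ?thesis
        apply (rule finish[OF loc e_def Sm, of A "R i" t])
        using it(5) Bn it(6) nbt' it(7) cS rT tT unfolding X_def T_def by auto
    qed
  qed
qed

end
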